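(* Let $n$ be a positive integer, $f:\mathbb{Z}_n\to\mathbb C$, and $m,l\le n$ positive integers. Then \[\sum_{r\in\mathbb{Z}_n}|\widehat f(r)|^2\cdot\min\left(\frac{m^2\gcd(r,n)}{n},\,m\right)\le\sum_{1\le k\le l:\ k\mid n}\frac{m^2\phi(k)}{k}G_f(n/k)+\sum_{l<k\le n:\ k\mid n}\frac{mn}{k}G_f(n/k).\]
   Context: The Fourier transform is $\widehat f(s)=\sum_{x\in\mathbb{Z}_n}f(x)e^{-2\pi i xs/n}$. For $r\in\mathbb{Z}_n$, $\gcd(r,n)$ is computed from any integer representative (so $\gcd(0,n)=n$). For a positive divisor $r$ of $n$ and $a\in\mathbb{Z}_n$, $g_f(a,r)=\sum_{x\in\mathbb{Z}_n:\,x=a+jr\text{ for some }j\in\mathbb{Z}_n}f(x)$ and $G_f(r)=\sum_{a=0}^{r-1}|g_f(a,r)|^2$. $\phi$ is Euler's totient function. *)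

theory Defs
  imports "HOL-Analysis.Analysis" "HOL-Number_Theory.Number_Theory"
begin

text \<open>Z_n is modelled by the representatives {0..<n}; f :: nat \<Rightarrow> complex is read on {0..<n}.\<close>

definition fourier :: "nat \<Rightarrow> (nat \<Rightarrow> complex) \<Rightarrow> nat \<Rightarrow> complex" where
  "fourier n f s = (\<Sum>x<n. f x * cis (- 2 * pi * real x * real s / real n))"

definition gsum :: "nat \<Rightarrow> (nat \<Rightarrow> complex) \<Rightarrow> nat \<Rightarrow> nat \<Rightarrow> complex" where
  "gsum n f a r = (\<Sum>x\<in>{x. x < n \<and> (\<exists>j<n. x = (a + j * r) mod n)}. f x)"

definition Gsum :: "nat \<Rightarrow> (nat \<Rightarrow> complex) \<Rightarrow> nat \<Rightarrow> real" where
  "Gsum n f r = (\<Sum>a<r. (cmod (gsum n f a r))^2)"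

end

theory Submission
  imports Defs "HOL-Library.Real_Mod"
begin

lemma orth:
  fixes a b r :: nat assumes "a < r" "b < r"
  shows "(\<Sum>t<r. cis (2*pi*(real b - real a)*real t/real r)) = (if a = b then of_nat r else 0)"
proof (cases "a = b")
  case True then show ?thesis by simp
next
  case False
  define w where "w = cis (2*pi*(real b - real a)/real r)"
  have r0: "r > 0" using assms by simp
  have pw: "cis (2*pi*(real b - real a)*real t/real r) = w ^ t" for t
  proof -
    have "w ^ t = cis (real t * (2*pi*(real b - real a)/real r))" unfolding w_def by (rule Complex.DeMoivre)
    also have "real t * (2*pi*(real b - real a)/real r) = 2*pi*(real b - real a)*real t/real r" by simp
    finally show ?thesis by simp
  qed
  have wr: "w ^ r = 1"
  proof -
    have "w ^ r = cis (real r * (2*pi*(real b - real a)/real r))" unfolding w_def by (rule Complex.DeMoivre)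
    also have "real r * (2*pi*(real b - real a)/real r) = 2*pi*(real b - real a)" using r0 by simp
    finally have "w ^ r = cis (2*pi*(real b - real a))" .
    moreover have "real b - real a = of_int (int b - int a)" by simp
    hence "cis (2*pi*(real b - real a)) = 1" by (metis Ints_of_int cis_multiple_2pi)
    ultimately show ?thesis by simp
  qed
  have w1: "w \<noteq> 1"
  proof
    assume "w = 1"
    then obtain N where N: "2*pi*(real b - real a)/real r = of_int N * (2*pi)"
      unfolding w_def cis_eq_1_iff by blast
    hence "(2*pi)*(real b - real a) = (2*pi)*(of_int N * real r)" using r0 by (simp add: field_simps)
    hence "real b - real a = of_int N * real r" using pi_gt_zero by (simp only: mult_cancel_left) simp
    hence "int b - int a = N * int r"
      by (metis of_int_eq_iff of_int_of_nat_eq of_int_diff of_int_mult)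
    hence eq: "int b - int a = N * int r" .
    have "N = 0 \<or> N \<ge> 1 \<or> N \<le> -1" by linarith
    moreover have "N \<noteq> 0" using eq False by auto
    moreover have "\<not> N \<ge> 1"
    proof
      assume "N \<ge> 1" hence h: "N * int r \<ge> 1 * int r" by (intro mult_right_mono) auto
      show False using h eq assms by linarith
    qed
    moreover have "\<not> N \<le> -1"
    proof
      assume "N \<le> -1" hence h: "N * int r \<le> (-1) * int r" by (intro mult_right_mono) auto
      show False using h eq assms by linarith
    qed
    ultimately show False by blast
  qed
  have "(\<Sum>t<r. cis (2*pi*(real b - real a)*real t/real r)) = (\<Sum>t<r. w ^ t)"
    using pw by simp
  also have "\<dots> = 0" using geometric_sum[OF w1, of r] wr by simp
  finally show ?thesis using False by simp
qed


lemma parseval: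
  fixes g :: "nat \<Rightarrow> complex" and r :: nat
  assumes r0: "0 < r"
  shows "(\<Sum>t<r. (cmod (\<Sum>a<r. g a * cis (-2*pi*real a*real t/real r)))^2)
       = real r * (\<Sum>a<r. (cmod (g a))^2)"
proof -
  define c where "c a t = cis (-2*pi*real a*real t/real r)" for a t :: nat
  have cc: "c a t * cnj (c b t) = cis (2*pi*(real b - real a)*real t/real r)" for a b t
    unfolding c_def cis_cnj cis_mult by (rule arg_cong[where f=cis]) (use r0 in \<open>simp add: field_simps\<close>)
  have "complex_of_real (\<Sum>t<r. (cmod (\<Sum>a<r. g a * c a t))^2)
      = (\<Sum>t<r. (\<Sum>a<r. g a * c a t) * cnj (\<Sum>b<r. g b * c b t))"
    by (simp only: of_real_sum complex_norm_square)
  also have "\<dots> = (\<Sum>t<r. \<Sum>a<r. \<Sum>b<r. g a * cnj (g b) * (c a t * cnj (c b t)))"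
    by (simp add: cnj_sum sum_product mult_ac)
  also have "\<dots> = (\<Sum>a<r. \<Sum>t<r. \<Sum>b<r. g a * cnj (g b) * (c a t * cnj (c b t)))"
    by (rule sum.swap)
  also have "\<dots> = (\<Sum>a<r. \<Sum>b<r. \<Sum>t<r. g a * cnj (g b) * (c a t * cnj (c b t)))"
    by (intro sum.cong refl sum.swap)
  also have "\<dots> = (\<Sum>a<r. \<Sum>b<r. g a * cnj (g b) * (\<Sum>t<r. c a t * cnj (c b t)))"
    by (simp add: sum_distrib_left)
  also have "\<dots> = (\<Sum>a<r. \<Sum>b<r. g a * cnj (g b) * (if a = b then of_nat r else 0))"
    by (intro sum.cong refl) (simp add: cc orth)
  also have "\<dots> = (\<Sum>a<r. of_nat r * (g a * cnj (g a)))"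
    by (simp add: if_distrib sum.delta mult_ac cong: if_cong)
  also have "\<dots> = complex_of_real (real r * (\<Sum>a<r. (cmod (g a))^2))"
    by (simp only: of_real_mult of_real_sum complex_norm_square of_real_of_nat_eq sum_distrib_left)
  finally show ?thesis unfolding c_def of_real_eq_iff .
qed


lemma gsum_set:
  fixes r n a :: nat
  assumes "r dvd n" "0 < n" "a < r"
  shows "{x. x < n \<and> (\<exists>j<n. x = (a + j*r) mod n)} = {x. x < n \<and> x mod r = a}"
proof (rule Set.set_eqI, rule iffI)
  fix x assume "x \<in> {x. x < n \<and> (\<exists>j<n. x = (a + j*r) mod n)}"
  then obtain j where x: "x < n" "x = (a + j*r) mod n" by auto
  have "x mod r = (a + j*r) mod r" using x(2) assms(1) by (simp add: mod_mod_cancel)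
  also have "\<dots> = a" using assms(3) by simp
  finally show "x \<in> {x. x < n \<and> x mod r = a}" using x by simp
next
  fix x assume "x \<in> {x. x < n \<and> x mod r = a}"
  hence x: "x < n" "x mod r = a" by auto
  have "x div r \<le> x" by simp
  hence xd: "x div r < n" using x by linarith
  have e: "a + (x div r)*r = x" using x(2) mod_div_mult_eq[of x r] by simp
  have "x = (a + (x div r)*r) mod n" using e x(1) by simp
  with xd show "x \<in> {x. x < n \<and> (\<exists>j<n. x = (a + j*r) mod n)}" using x by blast
qed

lemma fourier_coset:
  assumes "k * r = n" "0 < r" "0 < n"
  shows "fourier n f (t*k) = (\<Sum>a<r. gsum n f a r * cis (-2*pi*real a*real t/real r))"
proof -
  have k0: "k > 0" using assms by (cases k) auto
  have per: "cis (-2*pi*real x*real t/real r) = cis (-2*pi*real (x mod r)*real t/real r)" for x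
  proof -
    have "real x = real (x mod r) + real r * real (x div r)"
      by (metis of_nat_add of_nat_mult mod_mult_div_eq add.commute)
    hence e: "-2*pi*real x*real t/real r = -2*pi*real (x mod r)*real t/real r + 2*pi*(-real (x div r * t))"
      using assms(2) by (simp add: field_simps)
    have one: "cis (2*pi*(-real (x div r * t))) = 1"
      by (rule cis_multiple_2pi) (metis Ints_minus Ints_of_nat)
    have "cis (-2*pi*real x*real t/real r) = cis (-2*pi*real (x mod r)*real t/real r + 2*pi*(-real (x div r * t)))"
      by (simp only: e)
    also have "\<dots> = cis (-2*pi*real (x mod r)*real t/real r) * cis (2*pi*(-real (x div r * t)))"
      by (rule cis_mult[symmetric])
    finally show ?thesis using one by simp
  qed
  have "fourier n f (t*k) = (\<Sum>x<n. f x * cis (-2*pi*real x*real t/real r))"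
    unfolding fourier_def
  proof (intro sum.cong refl arg_cong[where f="\<lambda>y. _ * cis y"])
    fix x show "- 2 * pi * real x * real (t * k) / real n = -2*pi*real x*real t/real r"
      using k0 assms by (auto simp: field_simps simp flip: assms(1))
  qed
  also have "\<dots> = (\<Sum>x<n. f x * cis (-2*pi*real (x mod r)*real t/real r))"
    using per by simp
  also have "\<dots> = (\<Sum>a<r. \<Sum>x\<in>{x. x \<in> {..<n} \<and> x mod r = a}. f x * cis (-2*pi*real (x mod r)*real t/real r))"
    by (rule sum.group[symmetric]) (use assms in auto)
  also have "\<dots> = (\<Sum>a<r. gsum n f a r * cis (-2*pi*real a*real t/real r))"
  proof (intro sum.cong refl)
    fix a assume a: "a \<in> {..<r}"
    hence a': "a < r" by simp
    have rd: "r dvd n" using assms(1) by (metis dvd_triv_right)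
    have "(\<Sum>x\<in>{x. x \<in> {..<n} \<and> x mod r = a}. f x * cis (-2*pi*real (x mod r)*real t/real r))
        = (\<Sum>x\<in>{x. x < n \<and> x mod r = a}. f x * cis (-2*pi*real a*real t/real r))"
      by (intro sum.cong) auto
    also have "\<dots> = gsum n f a r * cis (-2*pi*real a*real t/real r)"
      unfolding gsum_def gsum_set[OF rd assms(3) a'] by (simp add: sum_distrib_right)
    finally show "(\<Sum>x\<in>{x. x \<in> {..<n} \<and> x mod r = a}. f x * cis (-2*pi*real (x mod r)*real t/real r))
        = gsum n f a r * cis (-2*pi*real a*real t/real r)" .
  qed
  finally show ?thesis .
qed


lemma coset_sum:
  fixes n k :: nat
  assumes "k dvd n" "0 < n"
  shows "(\<Sum>s<n. if k dvd s then (cmod (fourier n f s))^2 else 0) = real (n div k) * Gsum n f (n div k)"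
proof -
  define r where "r = n div k"
  have kr: "k * r = n" using assms r_def by simp
  have k0: "0 < k" using kr assms by (cases k) auto
  have r0: "0 < r" using kr assms by (cases r) auto
  have "(\<Sum>s<n. if k dvd s then (cmod (fourier n f s))^2 else 0)
      = (\<Sum>s\<in>{x \<in> {..<n}. k dvd x}. (cmod (fourier n f s))^2)"
    by (rule sum.inter_filter[symmetric]) simp
  also have "{x \<in> {..<n}. k dvd x} = (\<lambda>t. t*k) ` {..<r}"
  proof (rule Set.set_eqI, rule iffI)
    fix x assume "x \<in> {x \<in> {..<n}. k dvd x}"
    hence xk: "k dvd x" "x < n" by auto
    then obtain t where "x = t*k" by (metis dvdE mult.commute)
    hence x: "x = t*k" "x < n" using xk by auto
    hence "t < r" using kr k0 by (metis mult.commute mult_less_cancel1)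
    thus "x \<in> (\<lambda>t. t*k) ` {..<r}" using x by auto
  next
    fix x assume "x \<in> (\<lambda>t. t*k) ` {..<r}"
    then obtain t where x: "x = t*k" "t < r" by auto
    hence "t*k < r*k" using k0 by simp
    thus "x \<in> {x \<in> {..<n}. k dvd x}" using x kr by (auto simp: mult.commute)
  qed
  also have "(\<Sum>s\<in>(\<lambda>t. t*k) ` {..<r}. (cmod (fourier n f s))^2) = (\<Sum>t<r. (cmod (fourier n f (t*k)))^2)"
    by (rule sum.reindex_cong[where l="\<lambda>t. t*k"]) (use k0 in \<open>auto simp: inj_on_def\<close>)
  also have "\<dots> = (\<Sum>t<r. (cmod (\<Sum>a<r. gsum n f a r * cis (-2*pi*real a*real t/real r)))^2)"
    using fourier_coset[OF kr r0 assms(2)] by simp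
  also have "\<dots> = real r * Gsum n f r"
    unfolding Gsum_def by (rule parseval[OF r0])
  finally show ?thesis unfolding r_def .
qed

lemma swap_lemma:
  fixes c F :: "nat \<Rightarrow> real"
  assumes "finite D"
  shows "(\<Sum>k\<in>D. c k * (\<Sum>s<n. if k dvd s then F s else 0))
       = (\<Sum>s<n. F s * (\<Sum>k\<in>D. if k dvd s then c k else 0))"
proof -
  have "(\<Sum>k\<in>D. c k * (\<Sum>s<n. if k dvd s then F s else 0))
      = (\<Sum>k\<in>D. \<Sum>s<n. if k dvd s then c k * F s else 0)"
    by (simp add: sum_distrib_left if_distrib cong: if_cong)
  also have "\<dots> = (\<Sum>s<n. \<Sum>k\<in>D. if k dvd s then c k * F s else 0)"
    by (rule sum.swap)
  also have "\<dots> = (\<Sum>s<n. F s * (\<Sum>k\<in>D. if k dvd s then c k else 0))"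
    by (simp add: sum_distrib_left if_distrib mult.commute cong: if_cong)
  finally show ?thesis .
qed

lemma pointwise:
  fixes n m l s :: nat
  assumes "0 < n"
  shows "min (real m ^ 2 * real (gcd s n) / real n) (real m)
     \<le> (\<Sum>k\<in>{k. 1 \<le> k \<and> k \<le> l \<and> k dvd n}. if k dvd s then real m ^ 2 * real (totient k) / real n else 0)
       + (\<Sum>k\<in>{k. l < k \<and> k \<le> n \<and> k dvd n}. if k dvd s then real m else 0)"
    (is "?L \<le> ?A1 + ?A2")
proof -
  define d where "d = gcd s n"
  have d0: "0 < d" using assms d_def by simp
  have fin1: "finite {k. 1 \<le> k \<and> k \<le> l \<and> k dvd n}" by (rule finite_subset[of _ "{..l}"]) auto
  have fin2: "finite {k. l < k \<and> k \<le> n \<and> k dvd n}" by (rule finite_subset[of _ "{..n}"]) auto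
  have A1: "0 \<le> ?A1" by (intro sum_nonneg) auto
  have A2: "0 \<le> ?A2" by (intro sum_nonneg) auto
  show ?thesis
  proof (cases "d \<le> l")
    case True
    have "?A1 = (\<Sum>k\<in>{x \<in> {k. 1 \<le> k \<and> k \<le> l \<and> k dvd n}. x dvd s}. real m ^ 2 * real (totient k) / real n)"
      by (rule sum.inter_filter[symmetric, OF fin1])
    also have "{x \<in> {k. 1 \<le> k \<and> k \<le> l \<and> k dvd n}. x dvd s} = {k. k dvd d}"
    proof (rule Set.set_eqI, rule iffI)
      fix x assume "x \<in> {x \<in> {k. 1 \<le> k \<and> k \<le> l \<and> k dvd n}. x dvd s}"
      thus "x \<in> {k. k dvd d}" unfolding d_def by auto
    next
      fix x assume "x \<in> {k. k dvd d}"
      hence x: "x dvd d" by simp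
      hence "x \<le> d" "x > 0" using d0 by (auto intro: dvd_imp_le Nat.gr0I)
      moreover have "x dvd n" "x dvd s" using x unfolding d_def by (auto intro: dvd_trans)
      ultimately show "x \<in> {x \<in> {k. 1 \<le> k \<and> k \<le> l \<and> k dvd n}. x dvd s}" using True by auto
    qed
    also have "(\<Sum>k\<in>{k. k dvd d}. real m ^ 2 * real (totient k) / real n)
        = real m ^ 2 / real n * real (\<Sum>k\<in>{k. k dvd d}. totient k)"
      by (simp add: sum_distrib_left sum_divide_distrib)
    also have "(\<Sum>k\<in>{k. k dvd d}. totient k) = d" by (rule totient_divisor_sum)
    finally have "?A1 = real m ^ 2 * real d / real n" by simp
    hence "?L \<le> ?A1" unfolding d_def by simp
    thus ?thesis using A2 by linarith
  next
    case False
    have dmem: "d \<in> {k. l < k \<and> k \<le> n \<and> k dvd n}"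
      using False assms unfolding d_def by auto
    have "(if d dvd s then real m else 0) \<le> ?A2"
      by (rule member_le_sum[OF dmem _ fin2]) auto
    hence "real m \<le> ?A2" unfolding d_def by simp
    hence "?L \<le> ?A2" by linarith
    thus ?thesis using A1 by linarith
  qed
qed

theorem lemma4p6:
  fixes n m l :: nat and f :: "nat \<Rightarrow> complex"
  assumes "n > 0" "0 < m" "m \<le> n" "0 < l" "l \<le> n"
  shows "(\<Sum>r<n. (cmod (fourier n f r))^2 *
            min (real m ^ 2 * real (gcd r n) / real n) (real m))
       \<le> (\<Sum>k\<in>{k. 1 \<le> k \<and> k \<le> l \<and> k dvd n}.
             real m ^ 2 * real (totient k) / real k * Gsum n f (n div k))
         + (\<Sum>k\<in>{k. l < k \<and> k \<le> n \<and> k dvd n}.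
             real m * real n / real k * Gsum n f (n div k))"
proof -
  define F where "F s = (cmod (fourier n f s))^2" for s
  define T where "T k = (\<Sum>s<n. if k dvd s then F s else 0)" for k
  define D1 where "D1 = {k. 1 \<le> k \<and> k \<le> l \<and> k dvd n}"
  define D2 where "D2 = {k. l < k \<and> k \<le> n \<and> k dvd n}"
  have fin1: "finite D1" unfolding D1_def by (rule finite_subset[of _ "{..l}"]) auto
  have fin2: "finite D2" unfolding D2_def by (rule finite_subset[of _ "{..n}"]) auto
  have G: "Gsum n f (n div k) = real k / real n * T k" if "k dvd n" for k
  proof -
    have k0: "0 < k" using that assms(1) by (cases k) auto
    have "T k = real (n div k) * Gsum n f (n div k)"
      using coset_sum[OF that assms(1), of f] unfolding T_def F_def .
    also have "real (n div k) = real n / real k" by (rule real_of_nat_div[OF that])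
    finally show ?thesis using k0 assms(1) by (simp add: field_simps)
  qed
  have R1: "(\<Sum>k\<in>D1. real m ^ 2 * real (totient k) / real k * Gsum n f (n div k))
      = (\<Sum>k\<in>D1. (real m ^ 2 * real (totient k) / real n) * T k)"
  proof (intro sum.cong refl)
    fix k assume k: "k \<in> D1"
    hence "k dvd n" "0 < k" unfolding D1_def by auto
    thus "real m ^ 2 * real (totient k) / real k * Gsum n f (n div k) = (real m ^ 2 * real (totient k) / real n) * T k"
      using G assms(1) by (simp add: field_simps)
  qed
  have R2: "(\<Sum>k\<in>D2. real m * real n / real k * Gsum n f (n div k))
      = (\<Sum>k\<in>D2. real m * T k)"
  proof (intro sum.cong refl)
    fix k assume k: "k \<in> D2"
    hence "k dvd n" "0 < k" unfolding D2_def by auto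
    thus "real m * real n / real k * Gsum n f (n div k) = real m * T k"
      using G assms(1) by (simp add: field_simps)
  qed
  define A1 where "A1 s = (\<Sum>k\<in>D1. if k dvd s then real m ^ 2 * real (totient k) / real n else 0)" for s
  define A2 where "A2 s = (\<Sum>k\<in>D2. if k dvd s then real m else 0)" for s
  have "(\<Sum>r<n. F r * min (real m ^ 2 * real (gcd r n) / real n) (real m))
      \<le> (\<Sum>r<n. F r * (A1 r + A2 r))"
  proof (rule sum_mono, rule mult_left_mono)
    fix r show "min (real m ^ 2 * real (gcd r n) / real n) (real m) \<le> A1 r + A2 r"
      unfolding A1_def A2_def D1_def D2_def by (rule pointwise[OF assms(1)])
    show "0 \<le> F r" unfolding F_def by simp
  qed
  also have "\<dots> = (\<Sum>r<n. F r * A1 r) + (\<Sum>r<n. F r * A2 r)"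
    by (simp add: distrib_left sum.distrib)
  also have "(\<Sum>r<n. F r * A1 r) = (\<Sum>k\<in>D1. (real m ^ 2 * real (totient k) / real n) * T k)"
    unfolding A1_def T_def by (rule swap_lemma[OF fin1, symmetric])
  also have "(\<Sum>r<n. F r * A2 r) = (\<Sum>k\<in>D2. real m * T k)"
    unfolding A2_def T_def by (rule swap_lemma[OF fin2, symmetric])
  finally show ?thesis unfolding R1[unfolded D1_def, symmetric] R2[unfolded D2_def, symmetric]
    D1_def D2_def F_def .
qed

end
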